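(* Denote by $P_{\beta,\infty}$ the minimizer of $\mathcal{E}_{\beta,\infty}(P) = \operatorname{tr}(HP) + \frac{1}{\beta}\operatorname{tr}\{P\ln P + (1-P)\ln(1-P)\}$ and by $P_{\beta,\eta}$ the minimizer of $\mathcal{E}_{\beta,\infty}(P) + \frac{1}{\eta}\|P\|_1$, both subject to $\operatorname{tr} P = N$, $P = P^{\mathrm{T}}$, $0\preceq P\preceq I$. Then $$0 \le \mathcal{E}_{\beta,\infty}(P_{\beta,\eta}) - \mathcal{E}_{\beta,\infty}(P_{\beta,\infty}) \le \frac{1}{\eta}\|P_{\beta,\infty}\|_1,$$ and $$\operatorname{tr}\Bigl(\max\bigl(\beta^{-1}, |H-\mu|\bigr)(P_{\beta,\eta} - P_{\beta,\infty})^2\Bigr) \le \frac{1}{\eta}\|P_{\beta,\infty}\|_1.$$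
   Context: $H$ is an $n\times n$ real symmetric matrix with eigenpairs $\{\lambda_i,\phi_i\}$; $N$ is a positive integer; $\beta>0$ is the inverse temperature and $\eta>0$ the $\ell_1$ penalty parameter. $\|P\|_1=\sum_{i,j}|p_{ij}|$ is the entrywise $\ell_1$ norm and $A\preceq B$ means $B-A$ is positive semidefinite. The minimizer of the unregularized problem is $P_{\beta,\infty} = [1+\exp(\beta(H-\mu))]^{-1}$, where the chemical potential $\mu$ is determined by $\sum_{i=1}^n (1+\exp(\beta(\lambda_i-\mu)))^{-1} = N$. Both problems are strictly convex so minimizers exist and are unique. $|H-\mu|$ and $\max(\beta^{-1},|H-\mu|)$ are matrix functions defined via the spectral decomposition of $H$. *)

theory Defs
  imports "HOL-Analysis.Analysis"
begin

definition diagm :: "real^'n \<Rightarrow> real^'n^'n" where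
  "diagm d = (\<chi> i j. if i = j then d $ i else 0)"

definition matfun :: "(real \<Rightarrow> real) \<Rightarrow> real^'n^'n \<Rightarrow> real^'n^'n" where
  "matfun f A = (SOME B. \<exists>U d. orthogonal_matrix U \<and>
      A = U ** diagm d ** transpose U \<and> B = U ** diagm (\<chi> i. f (d $ i)) ** transpose U)"

definition psd :: "real^'n^'n \<Rightarrow> bool" where
  "psd A \<longleftrightarrow> (\<forall>x. 0 \<le> x \<bullet> (A *v x))"

definition l1norm :: "real^'n^'n \<Rightarrow> real" where
  "l1norm P = (\<Sum>i\<in>UNIV. \<Sum>j\<in>UNIV. \<bar>P $ i $ j\<bar>)"

text \<open>Binary entropy-type function x ln x + (1-x) ln (1-x) (with 0 ln 0 = 0).\<close>
definition ent :: "real \<Rightarrow> real" where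
  "ent x = x * ln x + (1 - x) * ln (1 - x)"

definition feasible :: "nat \<Rightarrow> real^'n^'n \<Rightarrow> bool" where
  "feasible N P \<longleftrightarrow> trace P = real N \<and> transpose P = P \<and> psd P \<and> psd (mat 1 - P)"

definition energy :: "real \<Rightarrow> real^'n^'n \<Rightarrow> real^'n^'n \<Rightarrow> real" where
  "energy \<beta> H P = trace (H ** P) + (1 / \<beta>) * trace (matfun ent P)"

definition is_minimizer :: "(real^'n^'n \<Rightarrow> real) \<Rightarrow> nat \<Rightarrow> real^'n^'n \<Rightarrow> bool" where
  "is_minimizer F N P \<longleftrightarrow> feasible N P \<and> (\<forall>Q. feasible N Q \<longrightarrow> F P \<le> F Q)"

definition fermi :: "real \<Rightarrow> real \<Rightarrow> real \<Rightarrow> real" where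
  "fermi \<beta> \<mu> x = 1 / (1 + exp (\<beta> * (x - \<mu>)))"

end

theory Submission
  imports Defs
begin


lemma lncosh_deriv: "((\<lambda>w. ln (cosh w)) has_real_derivative tanh x) (at (x::real))"
  by (auto intro!: derivative_eq_intros simp: tanh_def)

lemma tanh_le_self: assumes "0 \<le> (y::real)" shows "tanh y \<le> y"
proof -
  have "(\<lambda>x. tanh x) y - tanh 0 \<le> y - 0"
  proof -
    have "(\<lambda>x. x - tanh x) 0 \<le> (\<lambda>x. x - tanh x) y"
    proof (rule deriv_nonneg_imp_mono[of 0 y _ "\<lambda>x. tanh x ^ 2"])
      fix x :: real assume "x \<in> {0..y}"
      show "((\<lambda>x. x - tanh x) has_real_derivative tanh x ^ 2) (at x)"
        by (auto intro!: derivative_eq_intros)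
    qed (use assms in auto)
    then show ?thesis by simp
  qed
  then show ?thesis by simp
qed

lemma sinh_ge_self: assumes "0 \<le> (y::real)" shows "y \<le> sinh y"
proof -
  have "(\<lambda>x. sinh x - x) 0 \<le> (\<lambda>x. sinh x - x) y"
  proof (rule deriv_nonneg_imp_mono[of 0 y _ "\<lambda>x. cosh x - 1"])
    fix x :: real assume "x \<in> {0..y}"
    show "((\<lambda>x. sinh x - x) has_real_derivative cosh x - 1) (at x)"
      by (auto intro!: derivative_eq_intros)
    show "0 \<le> cosh x - 1" using cosh_real_ge_1[of x] by simp
  qed (use assms in auto)
  then show ?thesis by simp
qed

lemma tanh_div_antimono: assumes "0 < (y::real)" "y \<le> z" shows "tanh z * y \<le> tanh y * z"
proof -
  have "(\<lambda>x. tanh x / x) z \<le> (\<lambda>x. tanh x / x) y"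
  proof (rule deriv_nonpos_imp_antimono[of y z _ "\<lambda>x. ((1 - tanh x ^ 2) * x - tanh x) / x^2"])
    fix x :: real assume x: "x \<in> {y..z}"
    then have xp: "x > 0" using assms by auto
    show "((\<lambda>x. tanh x / x) has_real_derivative ((1 - tanh x ^ 2) * x - tanh x) / x^2) (at x)"
      using xp by (auto intro!: derivative_eq_intros simp: field_simps power2_eq_square)
    have "(1 - tanh x ^ 2) * x \<le> tanh x"
    proof -
      have c: "cosh x > 0" by simp
      have "1 - tanh x ^ 2 = 1 / cosh x ^ 2"
        using c by (simp add: tanh_def field_simps power2_eq_square)
          (metis cosh_square_eq power2_eq_square add.commute)
      moreover have "x \<le> sinh x * cosh x"
      proof -
        have "2 * x \<le> sinh (2 * x)" using sinh_ge_self[of "2*x"] xp by simp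
        also have "sinh (2*x) = 2 * sinh x * cosh x" by (simp add: sinh_double)
        finally show ?thesis by simp
      qed
      ultimately have "(1 - tanh x ^ 2) * x = x / cosh x ^ 2" by simp
      also have "\<dots> \<le> sinh x * cosh x / cosh x ^ 2"
        using \<open>x \<le> sinh x * cosh x\<close> c by (intro divide_right_mono) auto
      also have "\<dots> = tanh x" using c by (simp add: tanh_def power2_eq_square)
      finally show ?thesis .
    qed
    then show "((1 - tanh x ^ 2) * x - tanh x) / x^2 \<le> 0"
      by (intro divide_nonpos_nonneg) auto
  qed (use assms in auto)
  then show ?thesis using assms by (simp add: field_simps)
qed



lemma lncosh_le_sq: "ln (cosh (w::real)) \<le> w^2 / 2"
proof -
  have "ln (cosh \<bar>w\<bar>) \<le> \<bar>w\<bar>^2/2"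
  proof -
    have "(\<lambda>x. x^2/2 - ln (cosh x)) 0 \<le> (\<lambda>x. x^2/2 - ln (cosh x)) \<bar>w\<bar>"
    proof (rule deriv_nonneg_imp_mono[of 0 "\<bar>w\<bar>" _ "\<lambda>x. x - tanh x"])
      fix x :: real assume "x \<in> {0..\<bar>w\<bar>}"
      then show "0 \<le> x - tanh x" using tanh_le_self[of x] by auto
      show "((\<lambda>x. x^2/2 - ln (cosh x)) has_real_derivative x - tanh x) (at x)"
        by (auto intro!: derivative_eq_intros simp: tanh_def)
    qed auto
    then show ?thesis by simp
  qed
  moreover have "cosh \<bar>w\<bar> = cosh w" by (cases "w \<ge> 0") auto
  ultimately show ?thesis by simp
qed

lemma JJ_pos: assumes a: "0 < (a::real)" and w: "0 \<le> w"
  shows "ln (cosh w) \<le> ln (cosh a) + tanh a / (2*a) * (w^2 - a^2)"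
proof -
  define k where "k = tanh a / (2*a)"
  define \<phi> where "\<phi> = (\<lambda>x. ln (cosh a) + k * (x^2 - a^2) - ln (cosh x))"
  have der: "\<And>x. (\<phi> has_real_derivative 2*k*x - tanh x) (at x)"
    unfolding \<phi>_def by (auto intro!: derivative_eq_intros simp: tanh_def)
  have "\<phi> a \<le> \<phi> w"
  proof (cases "w \<le> a")
    case True
    show ?thesis
    proof (rule deriv_nonpos_imp_antimono[of w a \<phi> "\<lambda>x. 2*k*x - tanh x"])
      fix x assume x: "x \<in> {w..a}"
      show "2*k*x - tanh x \<le> 0"
      proof (cases "x = 0")
        case False
        then have "0 < x" using x w by auto
        then have "tanh a * x \<le> tanh x * a" using tanh_div_antimono[of x a] x by auto
        then show ?thesis using a unfolding k_def by (simp add: field_simps)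
      qed simp
    qed (use der True in auto)
  next
    case False
    show ?thesis
    proof (rule deriv_nonneg_imp_mono[of a w \<phi> "\<lambda>x. 2*k*x - tanh x"])
      fix x assume x: "x \<in> {a..w}"
      then have "tanh x * a \<le> tanh a * x" using tanh_div_antimono[of a x] a by auto
      then show "0 \<le> 2*k*x - tanh x" using a unfolding k_def by (simp add: field_simps)
    qed (use der False in auto)
  qed
  moreover have "\<phi> a = 0" unfolding \<phi>_def by simp
  ultimately show ?thesis unfolding \<phi>_def k_def by simp
qed

lemma JJ: assumes a: "(a::real) \<noteq> 0"
  shows "ln (cosh w) \<le> ln (cosh a) + tanh a / (2*a) * (w^2 - a^2)"
proof -
  have cab: "cosh \<bar>x\<bar> = cosh x" for x :: real by (cases "x \<ge> 0") auto
  have ca: "cosh \<bar>a\<bar> = cosh a" "cosh \<bar>w\<bar> = cosh w" by (rule cab)+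
  have "tanh \<bar>a\<bar> / (2*\<bar>a\<bar>) = tanh a / (2*a)" by (cases "a \<ge> 0") auto
  moreover have "\<bar>w\<bar>^2 = w^2" "\<bar>a\<bar>^2 = a^2" by simp_all
  ultimately show ?thesis using JJ_pos[of "\<bar>a\<bar>" "\<bar>w\<bar>"] a ca
    by simp
qed

lemma core_cosh:
  fixes a w :: real
  shows "ln (cosh w) - ln (cosh a) \<le> - (w + a) * tanh a + (w + a)^2 / max 1 (2*\<bar>a\<bar>)"
proof (cases "a = 0")
  case True
  moreover have "0 \<le> ln (cosh w)" using cosh_real_ge_1[of w] by (simp add: ln_ge_zero)
  moreover have "ln (cosh w) * 2 \<le> w * w" using lncosh_le_sq[of w] by (simp add: power2_eq_square)
  ultimately have "ln (cosh w) \<le> w * w" by linarith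
  then show ?thesis using True by (simp add: power2_eq_square)
next
  case False
  define k where "k = tanh a / (2*a)"
  define c where "c = max 1 (2*\<bar>a\<bar>)"
  have cpos: "c > 0" unfolding c_def by simp
  have tk: "tanh a = 2*a*k" using False unfolding k_def by simp
  have k0: "0 \<le> k" unfolding k_def using False
    by (cases "a > 0") (auto intro!: divide_nonneg_pos divide_nonpos_neg simp: not_less)
  have kc: "k * c \<le> 1"
  proof -
    have "k = tanh \<bar>a\<bar> / (2*\<bar>a\<bar>)" unfolding k_def by (cases "a \<ge> 0") auto
    moreover have "tanh \<bar>a\<bar> \<le> \<bar>a\<bar>" using tanh_le_self[of "\<bar>a\<bar>"] by simp
    moreover have "tanh \<bar>a\<bar> < 1" by (rule tanh_real_lt_1)
    ultimately have e: "k * (2*\<bar>a\<bar>) = tanh \<bar>a\<bar>" "tanh \<bar>a\<bar> \<le> \<bar>a\<bar>" "tanh \<bar>a\<bar> < 1"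
      using False by auto
    have ap: "\<bar>a\<bar> > 0" using False by simp
    have "(k * 2) * \<bar>a\<bar> \<le> (1/2 * 2) * \<bar>a\<bar>" using e by simp
    then have "k * 2 \<le> 1/2*2" using ap by (rule mult_right_le_imp_le)
    then have "k \<le> 1/2" by simp
    with e have "k \<le> 1/2" "k * (2*\<bar>a\<bar>) \<le> 1" by auto
    then show ?thesis unfolding c_def by (auto simp: max_def)
  qed
  have "ln (cosh w) - ln (cosh a) \<le> k * (w^2 - a^2)" using JJ[OF False, of w] unfolding k_def by simp
  also have "\<dots> \<le> - (w + a) * tanh a + (w + a)^2 / c"
  proof -
    have "- (w + a) * tanh a + (w + a)^2 / c - k * (w^2 - a^2) = (w+a)^2 * (1/c - k)"
      using cpos by (simp add: tk field_simps power2_eq_square)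
    moreover have "1/c - k \<ge> 0" using kc cpos by (simp add: field_simps)
    ultimately show ?thesis by (smt (verit) zero_le_power2 mult_nonneg_nonneg)
  qed
  finally show ?thesis unfolding c_def .
qed

lemma core:
  fixes t s :: real
  shows "ln (exp t + exp s) - ln (1 + exp t) \<le> s / (1 + exp t) + s^2 / (4 * max 1 \<bar>t\<bar>)"
proof -
  have e1: "exp t + exp s = 2 * exp ((t+s)/2) * cosh ((s-t)/2)" for t s :: real
  proof -
    have "exp ((t+s)/2) * exp ((s-t)/2) = exp s" "exp ((t+s)/2) * exp (-((s-t)/2)) = exp t"
      by (simp_all add: exp_add[symmetric] field_simps)
    then show ?thesis by (simp add: cosh_def field_simps)
  qed
  have l1: "ln (exp t + exp s) = ln 2 + (t+s)/2 + ln (cosh ((s-t)/2))" for t s :: real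
    by (subst e1) (simp add: ln_mult)
  have l2: "ln (1 + exp t) = ln 2 + t/2 + ln (cosh (t/2))"
    using l1[of t 0] by (simp add: add.commute)
  have th: "1 / (1 + exp t) = (1 - tanh (t/2)) / 2"
  proof -
    have "tanh (t/2) = (1 - exp (-t)) / (1 + exp (-t))" by (simp add: tanh_real_altdef)
    also have "\<dots> = (exp t - 1) / (exp t + 1)"
    proof -
      have "exp t > 0" by simp
      have "(1 - exp (-t)) * exp t = exp t - 1" "(1 + exp (-t)) * exp t = exp t + 1"
        by (simp_all add: exp_minus field_simps)
      then show ?thesis using \<open>exp t > 0\<close>
        by (metis mult_divide_mult_cancel_right order_less_irrefl)
    qed
    finally have "tanh (t/2) = (exp t - 1) / (exp t + 1)" .
    moreover have "exp t + 1 > 0" by (simp add: add_pos_pos)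
    ultimately show ?thesis by (simp add: field_simps)
  qed
  have cc: "ln (cosh ((s-t)/2)) - ln (cosh (t/2)) \<le> - ((s-t)/2 + t/2) * tanh (t/2) + ((s-t)/2 + t/2)^2 / max 1 (2*\<bar>t/2\<bar>)"
    by (rule core_cosh)
  have "max 1 (2*\<bar>t/2\<bar>) = max 1 \<bar>t\<bar>" by simp
  then have cc': "ln (cosh ((s-t)/2)) - ln (cosh (t/2)) \<le> - (s/2) * tanh (t/2) + (s/2)^2 / max 1 \<bar>t\<bar>"
    using cc by (simp add: field_simps)
  have "s / (1 + exp t) = s * (1 / (1 + exp t))" by simp
  also have "\<dots> = s * (1 - tanh (t/2)) / 2" by (simp only: th)
  finally have "s / (1 + exp t) = s * (1 - tanh (t/2)) / 2" .
  have "ln (exp t + exp s) - ln (1 + exp t) = s/2 + (ln (cosh ((s-t)/2)) - ln (cosh (t/2)))"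
    using l1[of t s] l2 by (simp add: field_simps)
  also have "\<dots> \<le> s/2 + (- (s/2) * tanh (t/2) + (s/2)^2 / max 1 \<bar>t\<bar>)"
    using cc' by (rule add_left_mono)
  also have "\<dots> = s * (1 - tanh (t/2)) / 2 + s^2 / (4 * max 1 \<bar>t\<bar>)"
    by (simp add: field_simps power2_eq_square)
  finally show ?thesis using \<open>s / (1 + exp t) = s * (1 - tanh (t/2)) / 2\<close> by simp
qed



lemma gibbs:
  fixes q r :: real
  assumes q: "0 \<le> q" "q \<le> 1" and r: "0 < r" "r < 1"
  shows "q * ln r + (1 - q) * ln (1 - r) \<le> ent q"
proof -
  have g: "x * ln y \<le> x * ln x + (y - x)" if "0 \<le> x" "0 < y" for x y :: real
  proof (cases "x = 0")
    case False
    then have xp: "x > 0" using that by simp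
    have "ln (y / x) \<le> y / x - 1" using ln_le_minus_one[of "y/x"] xp that by simp
    then have "x * ln (y / x) \<le> x * (y / x - 1)" using xp by (simp add: mult_left_mono)
    moreover have "ln (y / x) = ln y - ln x" using xp that by (simp add: ln_div)
    moreover have "x * (y / x - 1) = y - x" using xp by (simp add: field_simps)
    moreover have "x * ln (y / x) = x * ln y - x * ln x" using xp that by (simp add: ln_div algebra_simps)
    ultimately show ?thesis by linarith
  qed (use that in simp)
  have "q * ln r \<le> q * ln q + (r - q)" using g[of q r] q r by simp
  moreover have "(1 - q) * ln (1 - r) \<le> (1 - q) * ln (1 - q) + ((1 - r) - (1 - q))"
    using g[of "1-q" "1-r"] q r by simp
  ultimately show ?thesis unfolding ent_def by simp
qed

lemma scalar_ineq:
  fixes \<beta> \<mu> d q :: real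
  assumes beta: "0 < \<beta>" and q: "0 \<le> q" "q \<le> 1"
  shows "max (1 / \<beta>) \<bar>d - \<mu>\<bar> * (q - fermi \<beta> \<mu> d)^2
       \<le> (d - \<mu>) * (q - fermi \<beta> \<mu> d) + (1 / \<beta>) * (ent q - ent (fermi \<beta> \<mu> d))"
proof -
  define t where "t = \<beta> * (d - \<mu>)"
  define p where "p = fermi \<beta> \<mu> d"
  define c where "c = max 1 \<bar>t\<bar>"
  define s where "s = 2 * c * (q - p)"
  define u where "u = s - t"
  define r where "r = exp u / (1 + exp u)"
  have cpos: "c > 0" unfolding c_def by simp
  have pdef: "p = 1 / (1 + exp t)" unfolding p_def t_def fermi_def by simp
  have ep: "1 + exp t > 0" "1 + exp u > 0" by (simp_all add: add_pos_pos)
  have r01: "0 < r" "r < 1" unfolding r_def using ep by auto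
  have lnr: "ln r = u - ln (1 + exp u)" unfolding r_def using ep by (simp add: ln_div)
  have "1 - r = 1 / (1 + exp u)" unfolding r_def using ep by (simp add: field_simps)
  then have lnr1: "ln (1 - r) = - ln (1 + exp u)" using ep by (simp add: ln_div)
  have entq: "q * u - ln (1 + exp u) \<le> ent q"
    using gibbs[OF q r01] lnr lnr1 by (simp add: algebra_simps)
  have "1 + exp u = (exp t + exp s) / exp t" unfolding u_def by (simp add: exp_diff field_simps)
  then have lnu: "ln (1 + exp u) = ln (exp t + exp s) - t"
    by (simp add: ln_div add_pos_pos order.strict_implies_not_eq[symmetric])
  have lnp: "ln p = - ln (1 + exp t)" unfolding pdef using ep by (simp add: ln_div)
  have "1 - p = exp t / (1 + exp t)" unfolding pdef using ep by (simp add: field_simps)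
  then have lnp1: "ln (1 - p) = t - ln (1 + exp t)" using ep by (simp add: ln_div)
  have entp: "ent p = (1 - p) * t - ln (1 + exp t)"
    unfolding ent_def lnp lnp1 by (simp add: algebra_simps)
  have K: "ln (exp t + exp s) - ln (1 + exp t) \<le> s * p + s^2 / (4 * c)"
    using core[of t s] unfolding c_def pdef by simp
  have "c * (q - p)^2 \<le> t * (q - p) + (ent q - ent p)"
  proof -
    have "t * (q - p) + (ent q - ent p) \<ge> q * s - (ln (exp t + exp s) - ln (1 + exp t))"
      using entq lnu entp unfolding u_def by (simp add: algebra_simps)
    moreover have "q * s - (s * p + s^2 / (4 * c)) = c * (q - p)^2"
      unfolding s_def using cpos by (simp add: field_simps power2_eq_square)
    ultimately show ?thesis using K by linarith
  qed
  moreover have "\<beta> * max (1 / \<beta>) \<bar>d - \<mu>\<bar> = c"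
    unfolding c_def t_def using beta
    by (simp add: max_mult_distrib_left abs_mult)
  ultimately have "\<beta> * (max (1 / \<beta>) \<bar>d - \<mu>\<bar> * (q - p)^2)
      \<le> \<beta> * ((d - \<mu>) * (q - p) + (1 / \<beta>) * (ent q - ent p))"
  proof -
    assume a1: "c * (q - p)^2 \<le> t * (q - p) + (ent q - ent p)" and a2: "\<beta> * max (1 / \<beta>) \<bar>d - \<mu>\<bar> = c"
    have "\<beta> * (max (1 / \<beta>) \<bar>d - \<mu>\<bar> * (q - p)^2) = c * (q - p)^2" using a2 by (metis mult.assoc)
    moreover have "\<beta> * ((d - \<mu>) * (q - p) + (1 / \<beta>) * (ent q - ent p)) = t * (q - p) + (ent q - ent p)"
      unfolding t_def using beta by (simp add: algebra_simps)
    ultimately show ?thesis using a1 by linarith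
  qed
  then show ?thesis unfolding p_def using beta by simp
qed



lemma orth_cols:
  fixes U :: "real^'n^'n"
  assumes "orthogonal_matrix U"
  shows "column i U \<bullet> column j U = (if i = j then 1 else 0)"
proof -
  have "transpose U ** U = mat 1" using assms by (simp add: orthogonal_matrix_def)
  then have "(transpose U ** U) $ i $ j = mat 1 $ i $ j" by simp
  then show ?thesis by (simp add: matrix_mult_transpose_dot_column mat_def)
qed

lemma diag_mulv:
  fixes U :: "real^'n^'n"
  shows "(U ** diagm d ** transpose U) *v x = (\<Sum>i\<in>UNIV. (d$i * (column i U \<bullet> x)) *\<^sub>R column i U)"
proof -
  have "((U ** diagm d ** transpose U) *v x) $ r = (\<Sum>i\<in>UNIV. (d$i * (column i U \<bullet> x)) *\<^sub>R column i U) $ r" for r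
  proof -
    have "((U ** diagm d ** transpose U) *v x) $ r = (\<Sum>m\<in>UNIV. (\<Sum>k\<in>UNIV. U$r$k * d$k * U$m$k) * x$m)"
      by (simp add: matrix_matrix_mult_def matrix_vector_mult_def diagm_def transpose_def
          sum_distrib_left sum_distrib_right if_distrib cong: if_cong)
    also have "\<dots> = (\<Sum>k\<in>UNIV. d$k * (\<Sum>m\<in>UNIV. U$m$k * x$m) * U$r$k)"
      by (simp add: sum_distrib_left sum_distrib_right mult_ac) (rule sum.swap)
    also have "\<dots> = (\<Sum>i\<in>UNIV. (d$i * (column i U \<bullet> x)) *\<^sub>R column i U) $ r"
      by (simp add: column_def inner_vec_def sum_component)
    finally show ?thesis .
  qed
  then show ?thesis by (simp add: vec_eq_iff)
qed

lemma inner_col_sum: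
  fixes U :: "real^'n^'n"
  assumes "orthogonal_matrix U"
  shows "column j U \<bullet> (\<Sum>i\<in>UNIV. a i *\<^sub>R column i U) = a j"
  using assms by (simp add: inner_sum_right orth_cols if_distrib cong: if_cong)

lemma diag_eig:
  fixes U :: "real^'n^'n"
  assumes "orthogonal_matrix U"
  shows "(U ** diagm d ** transpose U) *v column j U = d$j *\<^sub>R column j U"
proof -
  have "(\<Sum>i\<in>UNIV. (d$i * (column i U \<bullet> column j U)) *\<^sub>R column i U)
     = (\<Sum>i\<in>UNIV. if i = j then d$j *\<^sub>R column j U else 0)"
    by (rule sum.cong) (auto simp: orth_cols[OF assms])
  then show ?thesis unfolding diag_mulv by simp
qed

lemma diagm_one: "diagm (\<chi> i. 1) = mat 1"
  by (simp add: diagm_def mat_def vec_eq_iff)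

lemma orth_expand:
  fixes U :: "real^'n^'n"
  assumes "orthogonal_matrix U"
  shows "y = (\<Sum>i\<in>UNIV. (column i U \<bullet> y) *\<^sub>R column i U)"
proof -
  have "U ** transpose U = mat 1" using assms by (simp add: orthogonal_matrix_def)
  then have "(U ** diagm (\<chi> i. 1) ** transpose U) *v y = y" by (simp add: diagm_one)
  then show ?thesis unfolding diag_mulv by simp
qed

lemma parseval:
  fixes U :: "real^'n^'n"
  assumes "orthogonal_matrix U"
  shows "(\<Sum>i\<in>UNIV. (column i U \<bullet> y)^2) = y \<bullet> y"
proof -
  have "y \<bullet> y = y \<bullet> (\<Sum>i\<in>UNIV. (column i U \<bullet> y) *\<^sub>R column i U)"
    using orth_expand[OF assms, of y] by simp
  also have "\<dots> = (\<Sum>i\<in>UNIV. (column i U \<bullet> y)^2)"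
    by (simp add: inner_sum_right power2_eq_square inner_commute)
  finally show ?thesis by simp
qed

lemma quad_form:
  fixes U :: "real^'n^'n"
  shows "x \<bullet> ((U ** diagm d ** transpose U) *v x) = (\<Sum>i\<in>UNIV. d$i * (column i U \<bullet> x)^2)"
  unfolding diag_mulv by (simp add: inner_sum_right power2_eq_square inner_commute mult_ac)

lemma trace_diagm_mult: "trace (diagm d ** C) = (\<Sum>k\<in>UNIV. d$k * C$k$k)"
proof -
  have "\<And>i k. (if i = k then d$i else 0) * C$k$i = (if k = i then d$i * C$i$i else 0)" by auto
  then show ?thesis by (simp add: trace_def matrix_matrix_mult_def diagm_def)
qed

lemma tUBU_diag: "(transpose U ** B ** U) $ k $ k = column k U \<bullet> (B *v column k U)"
  apply (simp add: matrix_matrix_mult_def matrix_vector_mult_def transpose_def column_def inner_vec_def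
      sum_distrib_left sum_distrib_right mult_ac)
  apply (subst sum.swap)
  apply (simp add: mult_ac)
  done

lemma trace_diag_mult:
  fixes U B :: "real^'n^'n"
  shows "trace ((U ** diagm d ** transpose U) ** B) = (\<Sum>k\<in>UNIV. d$k * (column k U \<bullet> (B *v column k U)))"
proof -
  have "trace ((U ** diagm d ** transpose U) ** B) = trace (U ** (diagm d ** (transpose U ** B)))"
    by (simp add: matrix_mul_assoc)
  also have "\<dots> = trace ((diagm d ** (transpose U ** B)) ** U)" by (rule trace_mul_sym)
  also have "\<dots> = trace (diagm d ** (transpose U ** B ** U))" by (simp add: matrix_mul_assoc)
  finally show ?thesis by (simp add: trace_diagm_mult tUBU_diag)
qed

lemma eig_fun:
  fixes U :: "real^'n^'n"
  assumes U: "orthogonal_matrix U" and v: "(U ** diagm d ** transpose U) *v v = l *\<^sub>R v"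
  shows "(U ** diagm (\<chi> i. f (d$i)) ** transpose U) *v v = f l *\<^sub>R v"
proof -
  define c where "c i = column i U \<bullet> v" for i
  have "d$m * c m = l * c m" for m
  proof -
    have "column m U \<bullet> ((U ** diagm d ** transpose U) *v v) = column m U \<bullet> (l *\<^sub>R v)" using v by simp
    then show ?thesis unfolding diag_mulv inner_col_sum[OF U] c_def by simp
  qed
  then have fc: "f (d$m) * c m = f l * c m" for m
    by (cases "c m = 0") auto
  have "(U ** diagm (\<chi> i. f (d$i)) ** transpose U) *v v = (\<Sum>i\<in>UNIV. (f (d$i) * c i) *\<^sub>R column i U)"
    unfolding diag_mulv c_def by simp
  also have "\<dots> = f l *\<^sub>R (\<Sum>i\<in>UNIV. c i *\<^sub>R column i U)"
    by (simp add: fc scaleR_sum_right)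
  also have "\<dots> = f l *\<^sub>R v" using orth_expand[OF U, of v] unfolding c_def by simp
  finally show ?thesis .
qed

lemma col_mult: "(B ** U) $ r $ i = (B *v column i U) $ r"
  by (simp add: matrix_matrix_mult_def matrix_vector_mult_def column_def)

lemma matfun_eq:
  fixes U A :: "real^'n^'n"
  assumes U: "orthogonal_matrix U" and A: "A = U ** diagm d ** transpose U"
  shows "matfun f A = U ** diagm (\<chi> i. f (d$i)) ** transpose U"
proof -
  let ?P = "\<lambda>B. \<exists>U d. orthogonal_matrix U \<and> A = U ** diagm d ** transpose U \<and>
              B = U ** diagm (\<chi> i. f (d $ i)) ** transpose U"
  have ex: "\<exists>B. ?P B" using U A by blast
  have "?P (matfun f A)" unfolding matfun_def by (rule someI_ex[OF ex])
  then obtain U' d' where U': "orthogonal_matrix U'" and A': "A = U' ** diagm d' ** transpose U'"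
    and B: "matfun f A = U' ** diagm (\<chi> i. f (d' $ i)) ** transpose U'" by blast
  define B0 where "B0 = U ** diagm (\<chi> i. f (d$i)) ** transpose U"
  have cols: "matfun f A *v column i U = B0 *v column i U" for i
  proof -
    have "A *v column i U = d$i *\<^sub>R column i U" using diag_eig[OF U] A by simp
    then have "(U' ** diagm d' ** transpose U') *v column i U = d$i *\<^sub>R column i U" using A' by simp
    from eig_fun[OF U' this, of f] have "matfun f A *v column i U = f (d$i) *\<^sub>R column i U"
      using B by simp
    moreover have "B0 *v column i U = f (d$i) *\<^sub>R column i U"
      unfolding B0_def using diag_eig[OF U, of "\<chi> i. f (d$i)" i] by simp
    ultimately show ?thesis by simp
  qed
  have "matfun f A ** U = B0 ** U"
    by (simp add: vec_eq_iff col_mult cols)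
  then have "matfun f A ** U ** transpose U = B0 ** U ** transpose U" by simp
  moreover have "U ** transpose U = mat 1" using U by (simp add: orthogonal_matrix_def)
  ultimately have "matfun f A ** (U ** transpose U) = B0 ** (U ** transpose U)"
    by (metis matrix_mul_assoc)
  then show ?thesis unfolding B0_def using \<open>U ** transpose U = mat 1\<close> by simp
qed



lemma sym_inner:
  fixes A :: "real^'n^'n"
  assumes "transpose A = A"
  shows "x \<bullet> (A *v y) = (A *v x) \<bullet> y"
proof -
  have "x \<bullet> (A *v y) = (x v* A) \<bullet> y" by (simp add: dot_lmul_matrix)
  also have "x v* A = transpose A *v x" by simp
  finally show ?thesis using assms by simp
qed

lemma cont_quad: "continuous_on S (\<lambda>x::real^'n. x \<bullet> (A *v x))"
  by (intro continuous_intros linear_continuous_on matrix_vector_mul_linear)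

lemma quad_zero:
  fixes a b :: real
  assumes "\<And>e. 2 * e * a + e^2 * b \<le> 0"
  shows "a = 0"
proof (rule ccontr)
  assume a: "a \<noteq> 0"
  define e where "e = a / (\<bar>b\<bar> + 1)"
  have bp: "\<bar>b\<bar> + 1 > 0" by simp
  have gen: "2 * (a / B) * a + (a / B)^2 * b = a^2 * (2 * B + b) / B^2" if "B \<noteq> 0" for B :: real
    using that by (simp add: field_simps power2_eq_square)
  have "2 * e * a + e^2 * b = a^2 * (2 * (\<bar>b\<bar> + 1) + b) / (\<bar>b\<bar> + 1)^2"
    unfolding e_def using bp by (intro gen) simp
  moreover have "a^2 * (2 * (\<bar>b\<bar> + 1) + b) / (\<bar>b\<bar> + 1)^2 > 0"
    using a bp by (intro divide_pos_pos mult_pos_pos) auto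
  ultimately show False using assms[of e] by simp
qed

lemma eigvec_exists:
  fixes A :: "real^'n^'n"
  assumes sym: "transpose A = A" and S: "subspace S" "closed S"
    and x0: "x0 \<in> S" "x0 \<noteq> 0" and inv: "\<And>x. x \<in> S \<Longrightarrow> A *v x \<in> S"
  shows "\<exists>u\<in>S. norm u = 1 \<and> A *v u = (u \<bullet> (A *v u)) *\<^sub>R u"
proof -
  define K where "K = S \<inter> sphere 0 1"
  have "compact K" unfolding K_def using S by (intro closed_Int_compact) auto
  moreover have "x0 /\<^sub>R norm x0 \<in> K" unfolding K_def using x0 S(1)
    by (auto simp: subspace_scale)
  then have "K \<noteq> {}" by auto
  ultimately obtain u where uK: "u \<in> K" and umax: "\<And>y. y \<in> K \<Longrightarrow> y \<bullet> (A *v y) \<le> u \<bullet> (A *v u)"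
    using continuous_attains_sup[OF _ _ cont_quad] by metis
  define l where "l = u \<bullet> (A *v u)"
  have uS: "u \<in> S" and un: "norm u = 1" using uK unfolding K_def by auto
  have uu: "u \<bullet> u = 1" using un by (simp add: norm_eq_1)
  have bound: "y \<bullet> (A *v y) \<le> l * (y \<bullet> y)" if "y \<in> S" for y
  proof (cases "y = 0")
    case False
    define z where "z = y /\<^sub>R norm y"
    have "z \<in> K" unfolding K_def z_def using that False S(1) by (auto simp: subspace_scale)
    then have "z \<bullet> (A *v z) \<le> l" using umax unfolding l_def by blast
    moreover have "z \<bullet> (A *v z) = (y \<bullet> (A *v y)) / (y \<bullet> y)"
      unfolding z_def by (simp add: matrix_vector_mult_scaleR power2_norm_eq_inner[symmetric] power2_eq_square field_simps)
    moreover have "y \<bullet> y > 0" using False by simp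
    ultimately show ?thesis by (simp add: field_simps)
  qed simp
  have orth: "v \<bullet> (A *v u - l *\<^sub>R u) = 0" if vS: "v \<in> S" for v
  proof -
    have "\<And>e. 2 * e * (v \<bullet> (A *v u - l *\<^sub>R u)) + e^2 * (v \<bullet> (A *v v) - l * (v \<bullet> v)) \<le> 0"
    proof -
      fix e :: real
      have yS: "u + e *\<^sub>R v \<in> S" using uS vS S(1) by (simp add: subspace_add subspace_scale)
      have B: "(u + e *\<^sub>R v) \<bullet> (A *v (u + e *\<^sub>R v)) \<le> l * ((u + e *\<^sub>R v) \<bullet> (u + e *\<^sub>R v))"
        by (rule bound[OF yS])
      have uAv: "u \<bullet> (A *v v) = v \<bullet> (A *v u)" using sym_inner[OF sym, of u v] by (simp add: inner_commute)
      have "2 * e * (v \<bullet> (A *v u - l *\<^sub>R u)) + e^2 * (v \<bullet> (A *v v) - l * (v \<bullet> v))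
         = (u + e *\<^sub>R v) \<bullet> (A *v (u + e *\<^sub>R v)) - l * ((u + e *\<^sub>R v) \<bullet> (u + e *\<^sub>R v))"
        using uu uAv unfolding l_def
        by (simp add: matrix_vector_right_distrib matrix_vector_mult_scaleR inner_add_left inner_add_right
            inner_diff_right inner_commute[of u v] power2_eq_square algebra_simps)
      then show "2 * e * (v \<bullet> (A *v u - l *\<^sub>R u)) + e^2 * (v \<bullet> (A *v v) - l * (v \<bullet> v)) \<le> 0"
        using B by linarith
    qed
    then show ?thesis by (rule quad_zero)
  qed
  have wS: "A *v u - l *\<^sub>R u \<in> S" using inv[OF uS] uS S(1) by (simp add: subspace_diff subspace_scale)
  have "(A *v u - l *\<^sub>R u) \<bullet> (A *v u - l *\<^sub>R u) = 0" by (rule orth[OF wS])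
  then have "A *v u = l *\<^sub>R u" by simp
  then show ?thesis using uS un unfolding l_def by blast
qed

lemma eigbasis:
  fixes A :: "real^'n^'n" and I :: "'n set"
  assumes sym: "transpose A = A" and fin: "finite I"
  shows "\<exists>f lam. (\<forall>i\<in>I. \<forall>j\<in>I. f i \<bullet> f j = (if i = j then 1 else 0)) \<and> (\<forall>i\<in>I. A *v f i = lam i *\<^sub>R f i)"
  using fin
proof (induction I rule: finite_induct)
  case empty
  then show ?case by simp
next
  case (insert i I)
  then obtain f lam where fo: "\<forall>a\<in>I. \<forall>b\<in>I. f a \<bullet> f b = (if a = b then 1 else 0)"
    and fe: "\<forall>a\<in>I. A *v f a = lam a *\<^sub>R f a" by blast
  define S where "S = (\<Inter>j\<in>I. {x. f j \<bullet> x = 0})"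
  have memS: "x \<in> S \<longleftrightarrow> (\<forall>j\<in>I. f j \<bullet> x = 0)" for x unfolding S_def by auto
  have subS: "subspace S" unfolding subspace_def by (auto simp: memS inner_add_right)
  have clS: "closed S" unfolding S_def by (intro closed_INT ballI closed_hyperplane)
  have invS: "A *v x \<in> S" if "x \<in> S" for x
  proof -
    have "f j \<bullet> (A *v x) = 0" if "j \<in> I" for j
    proof -
      have "f j \<bullet> (A *v x) = (A *v f j) \<bullet> x" by (rule sym_inner[OF sym])
      also have "\<dots> = lam j * (f j \<bullet> x)" using fe that by simp
      finally show ?thesis using \<open>x \<in> S\<close> that memS by simp
    qed
    then show ?thesis using memS by blast
  qed
  have "card (insert i I) \<le> CARD('n)" by (rule card_mono) auto
  then have cI: "card I < CARD('n)" using insert by simp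
  have "dim (f ` I) \<le> card (f ` I)" using insert(1) by (intro dim_le_card) (auto intro: span_base)
  also have "\<dots> \<le> card I" using insert(1) by (rule card_image_le)
  finally have "dim (f ` I) < DIM(real^'n)" using cI by simp
  then obtain x where x0: "x \<noteq> 0" and xo: "\<And>y. y \<in> span (f ` I) \<Longrightarrow> orthogonal x y"
    by (metis orthogonal_to_subspace_exists)
  have xS: "x \<in> S" unfolding memS
  proof
    fix j assume "j \<in> I"
    then have "f j \<in> span (f ` I)" by (intro span_base) auto
    then have "orthogonal x (f j)" by (rule xo)
    then show "f j \<bullet> x = 0" by (simp add: orthogonal_def inner_commute)
  qed
  obtain u where uS: "u \<in> S" and un: "norm u = 1" and ue: "A *v u = (u \<bullet> (A *v u)) *\<^sub>R u"
    using eigvec_exists[OF sym subS clS xS x0 invS] by blast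
  define f' where "f' = f(i := u)"
  define lam' where "lam' = lam(i := u \<bullet> (A *v u))"
  have uu: "u \<bullet> u = 1" using un by (simp add: norm_eq_1)
  have uf: "f j \<bullet> u = 0" "u \<bullet> f j = 0" if "j \<in> I" for j
    using uS that memS by (auto simp: inner_commute)
  have "\<forall>a\<in>insert i I. \<forall>b\<in>insert i I. f' a \<bullet> f' b = (if a = b then 1 else 0)"
    unfolding f'_def using fo uu uf insert(2) by auto
  moreover have "\<forall>a\<in>insert i I. A *v f' a = lam' a *\<^sub>R f' a"
    unfolding f'_def lam'_def using fe ue insert(2) by auto
  ultimately show ?case by blast
qed

theorem spectral:
  fixes A :: "real^'n^'n"
  assumes sym: "transpose A = A"
  shows "\<exists>U d. orthogonal_matrix U \<and> A = U ** diagm d ** transpose U"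
proof -
  obtain f :: "'n \<Rightarrow> real^'n" and lam where fo0: "\<forall>i\<in>UNIV. \<forall>j\<in>UNIV. f i \<bullet> f j = (if i = j then 1 else 0)"
    and fe0: "\<forall>i\<in>UNIV. A *v f i = lam i *\<^sub>R f i"
    using eigbasis[OF sym finite_class.finite_UNIV] by blast
  have fo: "\<And>i j. f i \<bullet> f j = (if i = j then 1 else 0)" using fo0 by blast
  have fe: "\<And>i. A *v f i = lam i *\<^sub>R f i" using fe0 by blast
  define U :: "real^'n^'n" where "U = (\<chi> r c. f c $ r)"
  have colU: "column c U = f c" for c unfolding U_def column_def by (simp add: vec_eq_iff)
  have oU: "orthogonal_matrix U"
    unfolding orthogonal_matrix matrix_mult_transpose_dot_column colU fo
    by (simp add: vec_eq_iff mat_def)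
  have "A ** U = U ** diagm (\<chi> i. lam i)"
  proof -
    have "(A ** U) $ r $ c = (U ** diagm (\<chi> i. lam i)) $ r $ c" for r c
    proof -
      have "(A ** U) $ r $ c = lam c * f c $ r" using fe[of c] by (simp add: col_mult colU)
      moreover have "(U ** diagm (\<chi> i. lam i)) $ r $ c = lam c * f c $ r"
      proof -
        have "\<And>k. U$r$k * (if k = c then (\<chi> i. lam i) $ k else 0) = (if k = c then lam c * f c $ r else 0)"
          by (auto simp: U_def)
        then show ?thesis by (simp add: matrix_matrix_mult_def diagm_def)
      qed
      ultimately show ?thesis by simp
    qed
    then show ?thesis by (simp add: vec_eq_iff)
  qed
  then have "A ** U ** transpose U = U ** diagm (\<chi> i. lam i) ** transpose U" by simp
  moreover have "A ** U ** transpose U = A" using oU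
    by (metis matrix_mul_assoc matrix_mul_rid orthogonal_matrix_def)
  ultimately show ?thesis using oU by metis
qed



lemma transpose_diag_sym: "transpose (U ** diagm d ** transpose U) = U ** diagm d ** transpose U"
proof -
  have "transpose (diagm d) = diagm d" by (simp add: diagm_def transpose_def vec_eq_iff)
  then show ?thesis by (simp add: matrix_transpose_mul matrix_mul_assoc)
qed

lemma transpose_minus: "transpose (A - B) = transpose A - (transpose B :: real^'n^'n)"
  by (simp add: transpose_def vec_eq_iff)

lemma trace_diag:
  fixes U :: "real^'n^'n"
  assumes "orthogonal_matrix U"
  shows "trace (U ** diagm d ** transpose U) = (\<Sum>k\<in>UNIV. d$k)"
proof -
  have "trace (U ** diagm d ** transpose U) = trace ((U ** diagm d ** transpose U) ** mat 1)" by simp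
  also have "\<dots> = (\<Sum>k\<in>UNIV. d$k)" unfolding trace_diag_mult using orth_cols[OF assms] by simp
  finally show ?thesis .
qed

lemma trace_sq:
  fixes U X :: "real^'n^'n"
  assumes "transpose X = X"
  shows "trace ((U ** diagm w ** transpose U) ** (X ** X)) = (\<Sum>k\<in>UNIV. w$k * ((X *v column k U) \<bullet> (X *v column k U)))"
  unfolding trace_diag_mult
  by (simp add: matrix_vector_mul_assoc[symmetric] sym_inner[OF assms])

lemma psd_diag:
  fixes U :: "real^'n^'n"
  assumes "\<And>i. 0 \<le> d$i"
  shows "psd (U ** diagm d ** transpose U)"
  unfolding psd_def quad_form using assms by (auto intro!: sum_nonneg)

lemma psd_diag_compl:
  fixes U :: "real^'n^'n"
  assumes U: "orthogonal_matrix U" and "\<And>i. d$i \<le> 1"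
  shows "psd (mat 1 - U ** diagm d ** transpose U)"
  unfolding psd_def
proof
  fix x :: "real^'n"
  have "x \<bullet> ((mat 1 - U ** diagm d ** transpose U) *v x) = x \<bullet> x - x \<bullet> ((U ** diagm d ** transpose U) *v x)"
    by (simp add: matrix_vector_mult_diff_rdistrib inner_diff_right)
  also have "\<dots> = (\<Sum>i\<in>UNIV. (1 - d$i) * (column i U \<bullet> x)^2)"
    unfolding quad_form parseval[OF U, of x, symmetric] by (simp add: sum_subtractf algebra_simps)
  also have "\<dots> \<ge> 0" using assms by (auto intro!: sum_nonneg)
  finally show "0 \<le> x \<bullet> ((mat 1 - U ** diagm d ** transpose U) *v x)" .
qed

lemma key:
  fixes H P U :: "real^'n^'n" and d :: "real^'n"
  assumes beta: "0 < \<beta>" and U: "orthogonal_matrix U" and H: "H = U ** diagm d ** transpose U"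
    and P: "feasible N P"
    and trF: "(\<Sum>i\<in>UNIV. fermi \<beta> \<mu> (d$i)) = real N"
    and p_def: "p = (\<chi> i. fermi \<beta> \<mu> (d$i))"
    and w_def: "w = (\<chi> i. max (1 / \<beta>) \<bar>d$i - \<mu>\<bar>)"
    and F_def: "F = U ** diagm p ** transpose U"
  shows "trace ((U ** diagm w ** transpose U) ** ((P - F) ** (P - F))) \<le> energy \<beta> H P - energy \<beta> H F"
proof -
  have Psym: "transpose P = P" and trP: "trace P = real N" and psdP: "psd P" and psdP1: "psd (mat 1 - P)"
    using P by (auto simp: feasible_def)
  obtain V q where V: "orthogonal_matrix V" and Pd: "P = V ** diagm q ** transpose V"
    using spectral[OF Psym] by blast
  define u where "u i = column i U" for i
  define v where "v j = column j V" for j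
  define c where "c i j = (v j \<bullet> u i)^2" for i j
  have Pv: "P *v v j = q$j *\<^sub>R v j" for j unfolding v_def Pd by (rule diag_eig[OF V])
  have vv: "v j \<bullet> v j = 1" for j unfolding v_def using orth_cols[OF V] by simp
  have uu: "u i \<bullet> u i = 1" for i unfolding u_def using orth_cols[OF U] by simp
  have q0: "0 \<le> q$j" for j
  proof -
    have "0 \<le> v j \<bullet> (P *v v j)" using psdP unfolding psd_def by blast
    then show ?thesis using Pv vv by simp
  qed
  have q1: "q$j \<le> 1" for j
  proof -
    have "0 \<le> v j \<bullet> ((mat 1 - P) *v v j)" using psdP1 unfolding psd_def by blast
    then show ?thesis using Pv vv by (simp add: matrix_vector_mult_diff_rdistrib inner_diff_right)
  qed
  have Fu: "F *v u i = p$i *\<^sub>R u i" for i unfolding u_def F_def by (rule diag_eig[OF U])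
  have Fsym: "transpose F = F" unfolding F_def by (rule transpose_diag_sym)
  have entP: "matfun ent P = V ** diagm (\<chi> j. ent (q$j)) ** transpose V" by (rule matfun_eq[OF V Pd])
  have entF: "matfun ent F = U ** diagm (\<chi> i. ent (p$i)) ** transpose U" by (rule matfun_eq[OF U F_def])
  have T1: "trace (H ** P) = (\<Sum>i\<in>UNIV. \<Sum>j\<in>UNIV. c i j * d$i * q$j)"
    unfolding H trace_diag_mult Pd quad_form c_def u_def v_def by (simp add: sum_distrib_left mult_ac)
  have T2: "trace (H ** F) = (\<Sum>i\<in>UNIV. d$i * p$i)"
    unfolding H trace_diag_mult using Fu uu unfolding u_def by simp
  have T3: "trace (matfun ent P) = (\<Sum>j\<in>UNIV. ent (q$j))" unfolding entP trace_diag[OF V] by simp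
  have T4: "trace (matfun ent F) = (\<Sum>i\<in>UNIV. ent (p$i))" unfolding entF trace_diag[OF U] by simp
  have sq: "(\<Sum>j\<in>UNIV. q$j) = real N" using trP unfolding Pd trace_diag[OF V] .
  have sp: "(\<Sum>i\<in>UNIV. p$i) = real N" using trF unfolding p_def by simp
  have g1: "(\<Sum>j\<in>UNIV. c i j) = 1" for i
    using parseval[OF V, of "u i"] uu unfolding c_def v_def by simp
  have g2: "(\<Sum>i\<in>UNIV. c i j) = 1" for j
    using parseval[OF U, of "v j"] vv unfolding c_def u_def by (simp add: inner_commute)
  have Xsym: "transpose (P - F) = P - F" using Psym Fsym by (simp add: transpose_minus)
  have T5: "trace ((U ** diagm w ** transpose U) ** ((P - F) ** (P - F)))
      = (\<Sum>i\<in>UNIV. \<Sum>j\<in>UNIV. c i j * w$i * (q$j - p$i)^2)"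
  proof -
    have inner: "((P - F) *v u i) \<bullet> ((P - F) *v u i) = (\<Sum>j\<in>UNIV. c i j * (q$j - p$i)^2)" for i
    proof -
      have "v j \<bullet> ((P - F) *v u i) = (q$j - p$i) * (v j \<bullet> u i)" for j
      proof -
        have "v j \<bullet> (P *v u i) = (P *v v j) \<bullet> u i" by (rule sym_inner[OF Psym])
        then show ?thesis using Pv Fu by (simp add: matrix_vector_mult_diff_rdistrib inner_diff_right algebra_simps)
      qed
      then show ?thesis using parseval[OF V, of "(P - F) *v u i"]
        unfolding c_def v_def by (simp add: power_mult_distrib mult_ac)
    qed
    show ?thesis unfolding trace_sq[OF Xsym] u_def[symmetric] inner
      by (simp add: sum_distrib_left mult_ac)
  qed
  define G where "G i j = (d$i - \<mu>) * (q$j - p$i) + (1 / \<beta>) * (ent (q$j) - ent (p$i)) - w$i * (q$j - p$i)^2" for i j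
  have G0: "0 \<le> G i j" for i j
    using scalar_ineq[OF beta q0[of j] q1[of j], of "d$i" \<mu>] unfolding G_def p_def w_def by simp
  have c0: "0 \<le> c i j" for i j unfolding c_def by simp
  have A1: "(\<Sum>i\<in>UNIV. \<Sum>j\<in>UNIV. c i j * d$i * p$i) = (\<Sum>i\<in>UNIV. d$i * p$i)"
  proof -
    have "(\<Sum>j\<in>UNIV. c i j * d$i * p$i) = (\<Sum>j\<in>UNIV. c i j) * (d$i * p$i)" for i
      by (simp add: sum_distrib_right mult.assoc)
    then have "(\<Sum>j\<in>UNIV. c i j * d$i * p$i) = d$i * p$i" for i using g1[of i] by simp
    then show ?thesis by simp
  qed
  have A2: "(\<Sum>i\<in>UNIV. \<Sum>j\<in>UNIV. c i j * q$j) = (\<Sum>j\<in>UNIV. q$j)"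
  proof -
    have "(\<Sum>i\<in>UNIV. \<Sum>j\<in>UNIV. c i j * q$j) = (\<Sum>j\<in>UNIV. \<Sum>i\<in>UNIV. c i j * q$j)" by (rule sum.swap)
    also have "\<dots> = (\<Sum>j\<in>UNIV. q$j)" using g2 by (simp add: sum_distrib_right[symmetric])
    finally show ?thesis .
  qed
  have A3: "(\<Sum>i\<in>UNIV. \<Sum>j\<in>UNIV. c i j * p$i) = (\<Sum>i\<in>UNIV. p$i)"
    using g1 by (simp add: sum_distrib_right[symmetric])
  have A4: "(\<Sum>i\<in>UNIV. \<Sum>j\<in>UNIV. c i j * ent (q$j)) = (\<Sum>j\<in>UNIV. ent (q$j))"
  proof -
    have "(\<Sum>i\<in>UNIV. \<Sum>j\<in>UNIV. c i j * ent (q$j)) = (\<Sum>j\<in>UNIV. \<Sum>i\<in>UNIV. c i j * ent (q$j))" by (rule sum.swap)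
    also have "\<dots> = (\<Sum>j\<in>UNIV. ent (q$j))" using g2 by (simp add: sum_distrib_right[symmetric])
    finally show ?thesis .
  qed
  have A5: "(\<Sum>i\<in>UNIV. \<Sum>j\<in>UNIV. c i j * ent (p$i)) = (\<Sum>i\<in>UNIV. ent (p$i))"
    using g1 by (simp add: sum_distrib_right[symmetric])
  have expand: "c i j * G i j = c i j * d$i * q$j - c i j * d$i * p$i - \<mu> * (c i j * q$j) + \<mu> * (c i j * p$i)
      + (1/\<beta>) * (c i j * ent (q$j)) - (1/\<beta>) * (c i j * ent (p$i)) - c i j * w$i * (q$j - p$i)^2" for i j
    unfolding G_def by (simp add: algebra_simps)
  have "(\<Sum>i\<in>UNIV. \<Sum>j\<in>UNIV. c i j * G i j)
     = trace (H ** P) - trace (H ** F) - \<mu> * (\<Sum>j\<in>UNIV. q$j) + \<mu> * (\<Sum>i\<in>UNIV. p$i)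
       + (1/\<beta>) * trace (matfun ent P) - (1/\<beta>) * trace (matfun ent F)
       - trace ((U ** diagm w ** transpose U) ** ((P - F) ** (P - F)))"
    unfolding expand T1 T2 T3 T4 T5 A1[symmetric] A2[symmetric] A3[symmetric] A4[symmetric] A5[symmetric]
    by (simp add: sum_subtractf sum.distrib sum_distrib_left)
  also have "\<dots> = energy \<beta> H P - energy \<beta> H F - trace ((U ** diagm w ** transpose U) ** ((P - F) ** (P - F)))"
    unfolding energy_def using sq sp by (simp add: algebra_simps)
  finally have eq: "energy \<beta> H P - energy \<beta> H F - trace ((U ** diagm w ** transpose U) ** ((P - F) ** (P - F)))
     = (\<Sum>i\<in>UNIV. \<Sum>j\<in>UNIV. c i j * G i j)" by simp
  have "0 \<le> (\<Sum>i\<in>UNIV. \<Sum>j\<in>UNIV. c i j * G i j)" using c0 G0 by (intro sum_nonneg mult_nonneg_nonneg)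
  then show ?thesis using eq by simp
qed



theorem theorem2:
  fixes H Pinf Peta :: "real^'n^'n" and N :: nat and \<beta> \<eta> \<mu> :: real
  assumes Hsym: "transpose H = H"
    and Npos: "0 < N"
    and beta: "0 < \<beta>" and eta: "0 < \<eta>"
    and mu: "trace (matfun (fermi \<beta> \<mu>) H) = real N"
    and Pinf: "is_minimizer (energy \<beta> H) N Pinf"
    and Peta: "is_minimizer (\<lambda>P. energy \<beta> H P + (1 / \<eta>) * l1norm P) N Peta"
  shows "0 \<le> energy \<beta> H Peta - energy \<beta> H Pinf
       \<and> energy \<beta> H Peta - energy \<beta> H Pinf \<le> (1 / \<eta>) * l1norm Pinf
       \<and> trace (matfun (\<lambda>x. max (1 / \<beta>) \<bar>x - \<mu>\<bar>) H ** ((Peta - Pinf) ** (Peta - Pinf)))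
           \<le> (1 / \<eta>) * l1norm Pinf"
proof -
  have fPinf: "feasible N Pinf" and minPinf: "\<And>Q. feasible N Q \<Longrightarrow> energy \<beta> H Pinf \<le> energy \<beta> H Q"
    using Pinf by (auto simp: is_minimizer_def)
  have fPeta: "feasible N Peta"
    and minPeta: "\<And>Q. feasible N Q \<Longrightarrow> energy \<beta> H Peta + (1 / \<eta>) * l1norm Peta \<le> energy \<beta> H Q + (1 / \<eta>) * l1norm Q"
    using Peta by (auto simp: is_minimizer_def)
  have l1pos: "0 \<le> l1norm P" for P :: "real^'n^'n" unfolding l1norm_def by (intro sum_nonneg) auto
  have c1: "0 \<le> energy \<beta> H Peta - energy \<beta> H Pinf" using minPinf[OF fPeta] by simp
  have c2gen: "energy \<beta> H Peta - energy \<beta> H Q \<le> (1 / \<eta>) * l1norm Q" if "feasible N Q" for Q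
  proof -
    have "0 \<le> (1 / \<eta>) * l1norm Peta" using eta l1pos by simp
    then show ?thesis using minPeta[OF that] by simp
  qed
  obtain U d where U: "orthogonal_matrix U" and Hd: "H = U ** diagm d ** transpose U"
    using spectral[OF Hsym] by blast
  define p where "p = (\<chi> i. fermi \<beta> \<mu> (d$i))"
  define w where "w = (\<chi> i. max (1 / \<beta>) \<bar>d$i - \<mu>\<bar>)"
  define F where "F = U ** diagm p ** transpose U"
  have Fm: "matfun (fermi \<beta> \<mu>) H = F" unfolding F_def p_def by (rule matfun_eq[OF U Hd])
  have Wm: "matfun (\<lambda>x. max (1 / \<beta>) \<bar>x - \<mu>\<bar>) H = U ** diagm w ** transpose U"
    unfolding w_def by (rule matfun_eq[OF U Hd])
  have trF: "(\<Sum>i\<in>UNIV. fermi \<beta> \<mu> (d$i)) = real N"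
    using mu unfolding Fm F_def trace_diag[OF U] p_def by simp
  have p01: "0 \<le> p$i" "p$i \<le> 1" for i
  proof -
    have "1 + exp (\<beta> * (d$i - \<mu>)) > 1" by simp
    then show "0 \<le> p$i" "p$i \<le> 1" unfolding p_def fermi_def by (auto simp del: exp_gt_zero intro: divide_le_eq_1_pos[THEN iffD2])
  qed
  have fF: "feasible N F"
    unfolding feasible_def
  proof (intro conjI)
    show "trace F = real N" unfolding F_def trace_diag[OF U] using trF p_def by simp
    show "transpose F = F" unfolding F_def by (rule transpose_diag_sym)
    show "psd F" unfolding F_def by (rule psd_diag) (use p01 in auto)
    show "psd (mat 1 - F)" unfolding F_def by (rule psd_diag_compl[OF U]) (use p01 in auto)
  qed
  have K: "trace ((U ** diagm w ** transpose U) ** ((P - F) ** (P - F))) \<le> energy \<beta> H P - energy \<beta> H F"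
    if "feasible N P" for P
    by (rule key[OF beta U Hd that trF p_def w_def F_def])
  have PinfF: "Pinf = F"
  proof -
    define X where "X = Pinf - F"
    have Xsym: "transpose X = X" using fPinf fF unfolding X_def feasible_def by (simp add: transpose_minus)
    have "trace ((U ** diagm w ** transpose U) ** (X ** X)) \<le> 0"
      using K[OF fPinf] minPinf[OF fF] unfolding X_def by simp
    then have s0: "(\<Sum>k\<in>UNIV. w$k * ((X *v column k U) \<bullet> (X *v column k U))) \<le> 0"
      unfolding trace_sq[OF Xsym] .
    have wpos: "w$k > 0" for k unfolding w_def using beta by (simp add: less_max_iff_disj)
    have nn: "\<And>k. 0 \<le> w$k * ((X *v column k U) \<bullet> (X *v column k U))"
      using wpos by (simp add: less_imp_le)
    have "\<forall>k\<in>UNIV. w$k * ((X *v column k U) \<bullet> (X *v column k U)) = 0"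
      using s0 nn by (metis (no_types, lifting) finite_class.finite_UNIV sum_nonneg sum_nonneg_eq_0_iff order.antisym)
    then have Xc: "X *v column k U = 0" for k using wpos[of k] by (metis UNIV_I inner_eq_zero_iff mult_eq_0_iff order_less_irrefl)
    have "X ** U = 0" by (simp add: vec_eq_iff col_mult Xc)
    then have "X ** U ** transpose U = 0" by simp
    moreover have "X ** U ** transpose U = X" using U
      by (metis matrix_mul_assoc matrix_mul_rid orthogonal_matrix_def)
    ultimately show ?thesis unfolding X_def by simp
  qed
  have c3: "trace (matfun (\<lambda>x. max (1 / \<beta>) \<bar>x - \<mu>\<bar>) H ** ((Peta - Pinf) ** (Peta - Pinf)))
           \<le> (1 / \<eta>) * l1norm Pinf"
    unfolding Wm PinfF using K[OF fPeta] c2gen[OF fF] by simp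
  show ?thesis using c1 c2gen[OF fPinf] c3 by simp
qed


end
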